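(* Let $M$ be a finite set. For any $\bar{\mathcal{F}}\subseteq\{f:M\to\mathbb{R}\}$ there exists a finite $\mathcal{F}\subseteq\{f:M\to\mathbb{R}\}$ such that $q(M,\eta,\mathcal{F})=q(M,\eta,\bar{\mathcal{F}})$ for every $\eta\in\Delta M$.
   Context: For $\eta\in\Delta M$ and $\mathcal{F}\subseteq\{f:M\to\mathbb{R}\}$, $q(M,\eta,\mathcal{F})$ denotes the unique maximizer of the Shannon entropy $-\sum_mq_m\log q_m$ (with $0\log0=0$) over $\{q\in\Delta M:\sum_mq_mf(m)=\sum_m\eta_mf(m)\ \forall f\in\mathcal{F}\}$. *)

theory Defs
  imports Complex_Main
begin

definition simplex :: "'a set \<Rightarrow> ('a \<Rightarrow> real) set" where
  "simplex M = {q. (\<forall>m\<in>M. 0 \<le> q m) \<and> (\<forall>m. m \<notin> M \<longrightarrow> q m = 0) \<and> (\<Sum>m\<in>M. q m) = 1}"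

text \<open>Shannon entropy (note ln 0 = 0 in Isabelle, so 0 log 0 = 0).\<close>
definition entropy :: "'a set \<Rightarrow> ('a \<Rightarrow> real) \<Rightarrow> real" where
  "entropy M q = - (\<Sum>m\<in>M. q m * ln (q m))"

definition moment_set :: "'a set \<Rightarrow> ('a \<Rightarrow> real) \<Rightarrow> ('a \<Rightarrow> real) set \<Rightarrow> ('a \<Rightarrow> real) set" where
  "moment_set M \<eta> F = {q \<in> simplex M. \<forall>f\<in>F. (\<Sum>m\<in>M. q m * f m) = (\<Sum>m\<in>M. \<eta> m * f m)}"

definition maxent :: "'a set \<Rightarrow> ('a \<Rightarrow> real) \<Rightarrow> ('a \<Rightarrow> real) set \<Rightarrow> ('a \<Rightarrow> real)" where
  "maxent M \<eta> F = (THE q. q \<in> moment_set M \<eta> F \<and>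
      (\<forall>q'\<in>moment_set M \<eta> F. entropy M q' \<le> entropy M q))"

end

theory Submission
  imports Defs "HOL-Library.Function_Algebras"
begin

lemma my_sum_apply: "(sum f A) x = (\<Sum>a\<in>A. f a x)"
  by (induction A rule: infinite_finite_induct) auto

theorem lemma3:
  fixes M :: "'a set" and Fbar :: "('a \<Rightarrow> real) set"
  assumes "finite M"
  shows "\<exists>F :: ('a \<Rightarrow> real) set. finite F \<and>
           (\<forall>\<eta>\<in>simplex M. maxent M \<eta> F = maxent M \<eta> Fbar)"
proof -
  interpret V: vector_space "\<lambda>c (f::'a\<Rightarrow>real) x. c * f x"
    by unfold_locales (auto simp: fun_eq_iff algebra_simps)
  define R where "R f = (\<lambda>x. if x \<in> M then f x else (0::real))" for f :: "'a \<Rightarrow> real"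
  define G where "G = R ` Fbar"
  obtain B where B: "B \<subseteq> G" "V.independent B" "G \<subseteq> V.span B"
    using V.maximal_independent_subset by blast
  define T where "T = (\<lambda>m. (\<lambda>x. if x = m then 1 else (0::real))) ` M"
  have RsumT: "R f = (\<Sum>m\<in>M. (\<lambda>x. f m * (if x = m then 1 else 0)))" for f
    using assms by (auto simp: fun_eq_iff R_def my_sum_apply if_distrib cong: if_cong)
  have "R f \<in> V.span T" for f
  proof -
    have "(\<Sum>m\<in>M. (\<lambda>x. f m * (if x = m then 1 else 0))) \<in> V.span T"
      by (rule V.span_sum, rule V.span_scale, rule V.span_base) (auto simp: T_def)
    then show ?thesis using RsumT by simp
  qed
  then have "B \<subseteq> V.span T" using B(1) by (auto simp: G_def)
  moreover have "finite T" using assms by (simp add: T_def)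
  ultimately have finB: "finite B" using V.independent_span_bound B(2) by blast
  have sumR: "(\<Sum>m\<in>M. q m * R f m) = (\<Sum>m\<in>M. q m * f m)" for q f
    by (rule sum.cong) (auto simp: R_def)
  have ms: "moment_set M \<eta> B = moment_set M \<eta> Fbar" for \<eta>
  proof
    show "moment_set M \<eta> Fbar \<subseteq> moment_set M \<eta> B"
    proof
      fix q assume q: "q \<in> moment_set M \<eta> Fbar"
      have "(\<Sum>m\<in>M. q m * b m) = (\<Sum>m\<in>M. \<eta> m * b m)" if "b \<in> B" for b
      proof -
        obtain f where f: "f \<in> Fbar" "b = R f" using \<open>b \<in> B\<close> B(1) G_def by auto
        show ?thesis using q f sumR[of q f] sumR[of \<eta> f] by (auto simp: moment_set_def)
      qed
      then show "q \<in> moment_set M \<eta> B" using q by (auto simp: moment_set_def)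
    qed
  next
    show "moment_set M \<eta> B \<subseteq> moment_set M \<eta> Fbar"
    proof
      fix q assume q: "q \<in> moment_set M \<eta> B"
      have "(\<Sum>m\<in>M. q m * f m) = (\<Sum>m\<in>M. \<eta> m * f m)" if "f \<in> Fbar" for f
      proof -
        have "R f \<in> V.span B" using that B(3) G_def by auto
        then obtain u where u: "R f = (\<Sum>v\<in>B. (\<lambda>x. u v * v x))"
          using V.span_finite[OF finB] by auto
        have hb: "(\<Sum>m\<in>M. (q m - \<eta> m) * b m) = 0" if "b \<in> B" for b
          using q that by (auto simp: moment_set_def algebra_simps sum_subtractf)
        have "(\<Sum>m\<in>M. (q m - \<eta> m) * R f m) = (\<Sum>m\<in>M. \<Sum>v\<in>B. (q m - \<eta> m) * (u v * v m))"
          by (simp add: u my_sum_apply sum_distrib_left)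
        also have "\<dots> = (\<Sum>v\<in>B. u v * (\<Sum>m\<in>M. (q m - \<eta> m) * v m))"
          by (subst sum.swap) (simp add: sum_distrib_left algebra_simps)
        also have "\<dots> = 0" using hb by simp
        finally have "(\<Sum>m\<in>M. (q m - \<eta> m) * f m) = 0" using sumR[of "\<lambda>m. q m - \<eta> m" f] by simp
        then show ?thesis by (simp add: algebra_simps sum_subtractf)
      qed
      then show "q \<in> moment_set M \<eta> Fbar" using q by (auto simp: moment_set_def)
    qed
  qed
  show ?thesis
    by (rule exI[of _ B]) (simp add: finB maxent_def ms)
qed

end
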